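(* Let $d>2$ be a prime such that $-1\in QNR_d$ and $2\in QNR_d$. Then the equation $$d=\left(\frac{k}{2j}\right)^2\frac{m^2-e^2}{em}$$ has no solutions $k,j,m,e\in\mathbb{N}$ with $\gcd(m,e)=1$ and $m>e>0$.
   Context: For an odd prime $d$, $QR_d$ is the set of nonzero quadratic residues modulo $d$ in $\{1,\dots,d-1\}$, and $QNR_d=\{1,\dots,d-1\}\setminus QR_d$ is the set of quadratic nonresidues modulo $d$ (residues taken mod $d$). *)

theory Defs
  imports "HOL-Number_Theory.Number_Theory"
begin

definition QR :: "nat \<Rightarrow> nat set" where
  "QR d = {a \<in> {1..d-1}. \<exists>x::nat. [x^2 = a] (mod d)}"

definition QNR :: "nat \<Rightarrow> nat set" where
  "QNR d = {1..d-1} - QR d"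

definition in_res :: "int \<Rightarrow> nat \<Rightarrow> nat set \<Rightarrow> bool" where
  "in_res a d S \<longleftrightarrow> nat (a mod int d) \<in> S"

end

theory Submission
  imports Defs "HOL-Computational_Algebra.Nth_Powers"
begin


lemma sq_coprime:
  fixes a b c :: nat
  assumes "coprime a b" "a * b = c ^ 2"
  shows "\<exists>x. a = x ^ 2"
proof (cases "a = 0 \<or> b = 0")
  case True
  then show ?thesis using assms(1) by (auto intro: exI[of _ 0] exI[of _ 1])
next
  case False
  then have "is_nth_power 2 a" using is_nth_power_mult_coprime_natD(1)[OF assms(1)] assms(2) by auto
  then show ?thesis by (auto elim: is_nth_powerE)
qed

lemma fourth_coprime:
  fixes a b c :: nat
  assumes "coprime a b" "a * b = c ^ 4"
  shows "\<exists>x. a = x ^ 4"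
proof (cases "a = 0 \<or> b = 0")
  case True
  then show ?thesis using assms(1) by (auto intro: exI[of _ 0] exI[of _ 1])
next
  case False
  then have "is_nth_power 4 a" using is_nth_power_mult_coprime_natD(1)[OF assms(1)] assms(2) by auto
  then show ?thesis by (auto elim: is_nth_powerE)
qed

lemma sq_coprime_q:
  fixes a b c q :: nat
  assumes "coprime a b" "a * b = q * c ^ 2" "q dvd b" "q > 0"
  shows "\<exists>x y. a = x ^ 2 \<and> b = q * y ^ 2"
proof -
  obtain b' where b: "b = q * b'" using assms(3) by blast
  have "a * b' = c ^ 2" using assms(2) assms(4) b by (simp add: algebra_simps)
  moreover have "coprime a b'" using assms(1) b by simp
  ultimately obtain x y where "a = x^2" "b' = y^2"
    using sq_coprime[of a b' c] sq_coprime[of b' a c] by (auto simp: ac_simps coprime_commute)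
  then show ?thesis using b by blast
qed

lemma fourth_d2:
  fixes a b c d :: nat
  assumes "prime d" "coprime a b" "a * b = d^2 * c ^ 4" "d dvd a"
  shows "\<exists>x y. a = d^2 * x ^ 4 \<and> b = y ^ 4"
proof -
  obtain a1 where a1: "a = d * a1" using assms(4) by blast
  have d0: "d > 0" using assms(1) prime_gt_0_nat by blast
  have e1: "a1 * b = d * c^4" using assms(3) a1 d0 by (simp add: power2_eq_square algebra_simps)
  have "\<not> d dvd b"
  proof
    assume "d dvd b" then have "d dvd 1" using assms(2,4) by (meson coprime_common_divisor)
    then show False using assms(1) by auto
  qed
  moreover have "d dvd a1 * b" using e1 by simp
  ultimately have "d dvd a1" using assms(1) prime_dvd_mult_iff by blast
  then obtain a2 where a2: "a1 = d * a2" by blast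
  have e2: "a2 * b = c^4" using e1 a2 d0 by (simp add: algebra_simps)
  have cp: "coprime a2 b" using assms(2) a1 a2 by simp
  obtain x where "a2 = x^4" using fourth_coprime[OF cp e2] by blast
  moreover obtain y where "b = y^4" using fourth_coprime[of b a2 c] cp e2 by (auto simp: ac_simps coprime_commute)
  ultimately show ?thesis using a1 a2 by (auto simp: power2_eq_square)
qed

lemma odd_sq4: "odd (r::nat) \<Longrightarrow> r^2 mod 4 = 1"
proof -
  assume "odd r" then obtain k where "r = 2*k+1" using oddE by blast
  then have "r^2 = 4*(k^2+k) + 1" by (simp add: power2_eq_square algebra_simps)
  then show ?thesis by simp
qed

lemma even_sq4: "even (r::nat) \<Longrightarrow> r^2 mod 4 = 0"
  by (auto simp: power2_eq_square)



lemma inv_fermat: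
  fixes d x :: nat
  assumes "prime d" "d > 2" "\<not> d dvd x"
  shows "[x * x ^ (d - 2) = 1] (mod d)"
proof -
  have "d - 1 = Suc (d - 2)" using assms(2) by simp
  then have "x * x ^ (d - 2) = x ^ (d - 1)" by simp
  then show ?thesis using fermat_theorem[OF assms(1) assms(3)] by simp
qed

lemma H1:
  fixes d x y :: nat
  assumes "prime d" "d > 2" "in_res (-1) d (QNR d)" "d dvd x^2 + y^2"
  shows "d dvd x"
proof (rule ccontr)
  assume nx: "\<not> d dvd x"
  define x' where "x' = x ^ (d - 2)"
  have f: "[x * x' = 1] (mod d)" using inv_fermat[OF assms(1,2) nx] unfolding x'_def .
  define z where "z = y * x'"
  have "[(x^2 + y^2) * x'^2 = 0] (mod d)" using assms(4) by (simp add: cong_0_iff)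
  moreover have "(x^2 + y^2) * x'^2 = (x*x')^2 + z^2" by (simp add: z_def power2_eq_square algebra_simps)
  moreover have "[(x*x')^2 = 1^2] (mod d)" using f by (rule cong_pow)
  then have "[(x*x')^2 + z^2 = 1^2 + z^2] (mod d)" by (rule cong_add[OF _ cong_refl])
  then have "[(x*x')^2 + z^2 = 1 + z^2] (mod d)" by simp
  ultimately have "[1 + z^2 = 0] (mod d)" by (metis cong_sym cong_trans)
  then have "[1 + z^2 = 1 + (d - 1)] (mod d)" using assms(2) by (simp add: cong_def)
  then have zq: "[z^2 = d - 1] (mod d)" by (rule iffD1[OF cong_add_lcancel_nat])
  have "(-1) mod int d = int d - 1" using assms(2) by (simp add: zmod_minus1)
  then have "nat ((-1) mod int d) = d - 1" using assms(2) by simp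
  then have "d - 1 \<in> QNR d" using assms(3) unfolding in_res_def by simp
  then have "d - 1 \<notin> QR d" unfolding QNR_def by simp
  moreover have "d - 1 \<in> {1..d-1}" using assms(2) by auto
  ultimately show False using zq unfolding QR_def by blast
qed

lemma H2:
  fixes d x y :: nat
  assumes "prime d" "d > 2" "in_res 2 d (QNR d)" "[y^2 = 2*x^2] (mod d)"
  shows "d dvd x"
proof (rule ccontr)
  assume nx: "\<not> d dvd x"
  define x' where "x' = x ^ (d - 2)"
  have f: "[x * x' = 1] (mod d)" using inv_fermat[OF assms(1,2) nx] unfolding x'_def .
  define z where "z = y * x'"
  have c1: "[y^2 * x'^2 = 2*x^2 * x'^2] (mod d)" using assms(4) by (simp add: cong_mult)
  have e1: "y^2 * x'^2 = z^2" by (simp add: z_def power2_eq_square algebra_simps)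
  have e2: "2*x^2 * x'^2 = 2 * (x*x')^2" by (simp add: power2_eq_square algebra_simps)
  have "[(x*x')^2 = 1^2] (mod d)" using f by (rule cong_pow)
  then have c2: "[2 * (x*x')^2 = 2 * 1^2] (mod d)" by (rule cong_mult[OF cong_refl])
  have "[z^2 = 2 * (x*x')^2] (mod d)" using c1 unfolding e1 e2 .
  then have zq: "[z^2 = 2] (mod d)" using c2 cong_trans by fastforce
  have "nat (2 mod int d) = 2" using assms(2) by simp
  then have "2 \<in> QNR d" using assms(3) unfolding in_res_def by simp
  then have "2 \<notin> QR d" unfolding QNR_def by simp
  moreover have "2 \<in> {1..d-1}" using assms(2) by auto
  ultimately show False using zq unfolding QR_def by blast
qed


context
  fixes d :: nat
  assumes dp: "prime d" and d2: "d > 2"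
    and H1: "\<And>x y. d dvd x^2 + y^2 \<Longrightarrow> d dvd x"
    and H2: "\<And>x y. [y^2 = 2*x^2] (mod d) \<Longrightarrow> d dvd x"
begin

lemma L2:
  fixes \<alpha> \<beta> u \<gamma> \<delta> :: nat
  assumes cp: "coprime \<alpha> \<beta>" and u2: "u^2 = \<alpha>^2 + \<beta>^2" and a: "\<alpha> = 2*\<gamma>^2"
    and b: "\<beta> = d*\<delta>^2" and uodd: "odd u" and g0: "\<gamma> > 0"
  shows False
proof -
  have bodd: "odd \<beta>"
  proof
    assume "even \<beta>"
    then have "even (u^2)" using u2 a by simp
    then show False using uodd by simp
  qed
  have "u^2 > \<beta>^2" using u2 a g0 by simp
  then have "u > \<beta>" using power_less_imp_less_base by blast
  moreover have "even (u - \<beta>)" using uodd bodd \<open>u > \<beta>\<close> by simp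
  ultimately obtain a' where ua: "u = \<beta> + 2*a'" by (metis add_diff_inverse_nat evenE less_imp_not_less)
  define b' where "b' = a' + \<beta>"
  have "4*(a'*b') = 4*\<gamma>^4" using u2 a ua unfolding b'_def
    by (simp add: power2_eq_square algebra_simps power4_eq_xxxx)
  then have ab: "a'*b' = \<gamma>^4" by simp
  have cab: "coprime a' b'"
  proof (rule coprimeI)
    fix c assume c1: "c dvd a'" and c2: "c dvd b'"
    have "c dvd \<beta>" using c1 c2 unfolding b'_def by (simp add: dvd_add_right_iff)
    then have cu: "c dvd u" using c1 ua by simp
    have "c^2 dvd \<alpha>^2" using cu \<open>c dvd \<beta>\<close> u2
      by (metis dvd_add_right_iff dvd_power_same add.commute)
    then have "c dvd \<alpha>" by simp
    then show "is_unit c" using \<open>c dvd \<beta>\<close> cp by (meson coprime_common_divisor)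
  qed
  obtain N where aN: "a' = N^4" using fourth_coprime[OF cab ab] by blast
  obtain M where bM: "b' = M^4" using fourth_coprime[of b' a' \<gamma>] cab ab by (auto simp: ac_simps coprime_commute)
  have cMN: "coprime M N" using cab aN bM by (simp add: coprime_commute)
  have M4: "M^4 = N^4 + \<beta>" using aN bM b'_def by simp
  have uMN: "u = M^4 + N^4" using ua aN bM b'_def by simp
  have "(N^2)^2 \<le> (M^2)^2" using M4 by (simp add: power_mult[symmetric])
  then have "N^2 \<le> M^2" using power2_le_imp_le by blast
  then obtain X where MX: "M^2 = N^2 + X" using le_Suc_ex by blast
  define Y where "Y = X + 2*N^2"
  have YMN: "Y = M^2 + N^2" using MX Y_def by simp
  have XY: "X * Y = d*\<delta>^2"
  proof -
    have "M^4 = (M^2)^2" by (simp add: power_mult[symmetric])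
    also have "\<dots> = (N^2+X)^2" using MX by simp
    finally have "M^4 = N^4 + X*Y" unfolding Y_def by (simp add: power2_eq_square algebra_simps power4_eq_xxxx)
    then show ?thesis using M4 b by simp
  qed
  have Yodd: "odd Y" using uMN uodd YMN by (simp add: power_mult[symmetric])
  have cXY: "coprime X Y"
  proof (rule coprimeI)
    fix c assume c1: "c dvd X" and c2: "c dvd Y"
    have "c dvd 2*N^2" using c1 c2 Y_def by (simp add: dvd_add_right_iff)
    moreover have "odd c" using c2 Yodd dvd_trans by blast
    ultimately have cN: "c dvd N^2" by (simp add: coprime_dvd_mult_right_iff)
    then have "c dvd M^2" using MX c1 by simp
    then show "is_unit c" using cN cMN
      by (metis coprime_common_divisor coprime_power_left_iff coprime_power_right_iff zero_less_numeral)
  qed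
  have "d dvd X * Y" using XY by simp
  then have "d dvd X \<or> d dvd Y" using dp prime_dvd_mult_iff by blast
  then show False
  proof
    assume "d dvd Y"
    then have "d dvd M^2 + N^2" "d dvd N^2 + M^2" using YMN by (simp_all add: add.commute)
    then have "d dvd M" "d dvd N" using H1 by blast+
    then show False using cMN dp by (metis coprime_common_divisor not_prime_unit)
  next
    assume "d dvd X"
    then obtain y x where Yy: "Y = y^2" and Xx: "X = d*x^2"
      using sq_coprime_q[of Y X d \<delta>] cXY XY dp prime_gt_0_nat by (auto simp: ac_simps coprime_commute)
    have e: "2*M^2 = y^2 + d*x^2" using MX Y_def Yy Xx by simp
    then have "[y^2 + d*x^2 = 2*M^2] (mod d)" by simp
    moreover have "[y^2 + d*x^2 = y^2] (mod d)" by (simp add: cong_def)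
    ultimately have "[y^2 = 2*M^2] (mod d)" by (metis cong_sym cong_trans)
    then have dM: "d dvd M" using H2 by blast
    then have "d dvd 2*M^2" by (simp add: power2_eq_square)
    then have "d dvd y^2" using e by (simp add: dvd_add_left_iff)
    then have "d dvd N^2 + M^2" using Yy YMN by (simp add: add.commute)
    then have "d dvd N" using H1 by blast
    then show False using dM cMN dp by (metis coprime_common_divisor not_prime_unit)
  qed
qed

lemma L1:
  fixes \<alpha> \<beta> u \<gamma> \<delta> :: nat
  assumes cp: "coprime \<alpha> \<beta>" and u2: "u^2 = \<alpha>^2 + \<beta>^2" and a: "\<alpha> = \<gamma>^2"
    and b: "\<beta> = 2*d*\<delta>^2" and uodd: "odd u" and g0: "\<gamma> > 0" and d0: "\<delta> > 0"
    and IH: "\<And>w' u r s. w' < 2*\<gamma>*\<delta> \<Longrightarrow> w' > 0 \<Longrightarrow> u^2 = r^2 + d*w'^2 \<Longrightarrow> s^2 = u^2 + d*w'^2 \<Longrightarrow> False"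
  shows False
proof -
  have dpos: "d > 0" using d2 by simp
  have aodd: "odd \<alpha>"
  proof
    assume "even \<alpha>"
    then have "even (u^2)" using u2 b by simp
    then show False using uodd by simp
  qed
  have "u^2 > \<alpha>^2" using u2 b d0 dpos by simp
  then have "u > \<alpha>" using power_less_imp_less_base by blast
  moreover have "even (u - \<alpha>)" using uodd aodd \<open>u > \<alpha>\<close> by simp
  ultimately obtain a' where ua: "u = \<alpha> + 2*a'" by (metis add_diff_inverse_nat evenE less_imp_not_less)
  define b' where "b' = a' + \<alpha>"
  have "4*(a'*b') = 4*(d^2*\<delta>^4)" using u2 b ua unfolding b'_def
    by (simp add: power2_eq_square algebra_simps power4_eq_xxxx)
  then have ab: "a'*b' = d^2*\<delta>^4" by simp
  have cab: "coprime a' b'"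
  proof (rule coprimeI)
    fix c assume c1: "c dvd a'" and c2: "c dvd b'"
    have "c dvd \<alpha>" using c1 c2 unfolding b'_def by (simp add: dvd_add_right_iff)
    then have cu: "c dvd u" using c1 ua by simp
    have "c^2 dvd \<beta>^2" using cu \<open>c dvd \<alpha>\<close> u2
      by (metis dvd_add_right_iff dvd_power_same)
    then have "c dvd \<beta>" by simp
    then show "is_unit c" using \<open>c dvd \<alpha>\<close> cp by (meson coprime_common_divisor)
  qed
  have "d dvd a' * b'" using ab by (simp add: power2_eq_square)
  then have "d dvd a' \<or> d dvd b'" using dp prime_dvd_mult_iff by blast
  moreover have "\<not> d dvd b'"
  proof
    assume db: "d dvd b'"
    obtain N M where bN: "b' = d^2*N^4" and aM: "a' = M^4"
      using fourth_d2[OF dp, of b' a' \<delta>] db cab ab by (auto simp: ac_simps coprime_commute)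
    have "d^2*N^4 = M^4 + \<gamma>^2" using bN aM b'_def a by simp
    then have "d dvd (M^2)^2 + \<gamma>^2" by (metis dvd_mult2 dvd_refl power2_eq_square power_mult numeral_Bit0 mult_2)
    then have "d dvd M^2" using H1 by blast
    then have "d dvd a'" using aM by (metis dvd_mult2 power2_eq_square power_mult numeral_Bit0 mult_2)
    then show False using db cab dp by (metis coprime_common_divisor not_prime_unit)
  qed
  ultimately have da: "d dvd a'" by blast
  obtain N M where aN: "a' = d^2*N^4" and bM: "b' = M^4"
    using fourth_d2[OF dp cab ab da] by blast
  have M4: "M^4 = d^2*N^4 + \<gamma>^2" using aN bM b'_def a by simp
  have Npos: "N > 0" using ab aN d0 dpos by (cases "N = 0") auto
  have "N^4 \<le> \<delta>^4"
  proof -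
    have "b' > 0" using b'_def aodd by (auto)
    then have "a' \<le> a' * b'" by simp
    then have "d^2 * N^4 \<le> d^2 * \<delta>^4" unfolding ab[symmetric] aN[symmetric] .
    moreover have "d^2 > 0" using dpos by simp
    ultimately show ?thesis using mult_le_cancel1 by (metis mult_le_mono1 nat_mult_le_cancel_disj)
  qed
  then have "N \<le> \<delta>" using power_le_imp_le_base[of N 3 \<delta>] by (simp add: numeral_eq_Suc)
  moreover have "\<delta> < 2*\<gamma>*\<delta>" using g0 d0 by simp
  ultimately have Nlt: "N < 2*\<gamma>*\<delta>" by linarith
  have "(d*N^2)^2 < (M^2)^2" using M4 g0 by (simp add: power_mult_distrib power_mult[symmetric])
  then have "d*N^2 < M^2" using power_less_imp_less_base by blast
  then obtain X where MX: "M^2 = d*N^2 + X" using le_Suc_ex less_imp_le by blast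
  define Y where "Y = X + 2*d*N^2"
  have YMN: "Y = M^2 + d*N^2" using MX Y_def by simp
  have XY: "X * Y = \<gamma>^2"
  proof -
    have "M^4 = (M^2)^2" by (simp add: power_mult[symmetric])
    also have "\<dots> = (d*N^2+X)^2" using MX by simp
    finally have "M^4 = d^2*N^4 + X*Y" unfolding Y_def by (simp add: power2_eq_square algebra_simps power4_eq_xxxx)
    then show ?thesis using M4 by simp
  qed
  have "u = d^2*N^4 + M^4" using ua aN bM b'_def by simp
  then have Yodd: "odd Y" using uodd YMN by (simp add: power_mult[symmetric] power_mult_distrib)
  have cMN: "coprime (M^2) (d*N^2)" using cab aN bM
    by (simp add: coprime_commute power_mult_distrib)
  have cXY: "coprime X Y"
  proof (rule coprimeI)
    fix c assume c1: "c dvd X" and c2: "c dvd Y"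
    have "c dvd 2*(d*N^2)" using c1 c2 Y_def by (simp add: dvd_add_right_iff mult.assoc)
    moreover have "odd c" using c2 Yodd dvd_trans by blast
    ultimately have cN: "c dvd d*N^2" by (simp add: coprime_dvd_mult_right_iff)
    then have "c dvd M^2" using MX c1 by simp
    then show "is_unit c" using cN cMN by (meson coprime_common_divisor)
  qed
  obtain x where Xx: "X = x^2" using sq_coprime[OF cXY XY] by blast
  obtain y where Yy: "Y = y^2" using sq_coprime[of Y X \<gamma>] cXY XY by (auto simp: ac_simps coprime_commute)
  show False
    using IH[OF Nlt Npos, of M x y] MX Xx YMN Yy by (simp add: add.commute)
qed

lemma core:
  fixes \<alpha> \<beta> u c0 :: nat
  assumes cp: "coprime \<alpha> \<beta>" and u2: "u^2 = \<alpha>^2 + \<beta>^2" and ab: "\<alpha>*\<beta> = 2*d*c0^2"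
    and db: "d dvd \<beta>" and c0: "c0 > 0" and uodd: "odd u"
    and IH: "\<And>w' u r s. w' < 2*c0 \<Longrightarrow> w' > 0 \<Longrightarrow> u^2 = r^2 + d*w'^2 \<Longrightarrow> s^2 = u^2 + d*w'^2 \<Longrightarrow> False"
  shows False
proof -
  have dpos: "d > 0" using d2 by simp
  have dodd: "odd d" using prime_odd_nat[OF dp d2] .
  have "2 dvd \<alpha>*\<beta>" using ab by simp
  then have "2 dvd \<alpha> \<or> 2 dvd \<beta>" using prime_dvd_mult_iff[of 2] two_is_prime_nat by blast
  then show False
  proof
    assume "2 dvd \<beta>"
    then have "2*d dvd \<beta>" using db dodd by (intro divides_mult) auto
    then obtain \<gamma> \<delta> where a: "\<alpha> = \<gamma>^2" and b: "\<beta> = (2*d)*\<delta>^2"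
      using sq_coprime_q[OF cp, of "2*d" c0] ab dpos by auto
    have "(2*d)*(\<gamma>*\<delta>)^2 = (2*d)*c0^2" using ab a b by (simp add: power_mult_distrib algebra_simps)
    then have "(\<gamma>*\<delta>)^2 = c0^2" using dpos by simp
    then have c: "\<gamma>*\<delta> = c0" by (simp add: power2_eq_iff_nonneg)
    then have "\<gamma> > 0" "\<delta> > 0" using c0 by auto
    then show False using L1[OF cp u2 a _ uodd] b IH c by (auto simp: mult.assoc)
  next
    assume "2 dvd \<alpha>"
    then obtain \<alpha>' where a: "\<alpha> = 2*\<alpha>'" by blast
    obtain \<beta>' where b: "\<beta> = d*\<beta>'" using db by blast
    have e: "\<alpha>' * \<beta>' = c0^2" using ab a b dpos by (simp add: algebra_simps)
    have cp': "coprime \<alpha>' \<beta>'" using cp a b by simp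
    obtain \<gamma> where g: "\<alpha>' = \<gamma>^2" using sq_coprime[OF cp' e] by blast
    obtain \<delta> where dd: "\<beta>' = \<delta>^2" using sq_coprime[of \<beta>' \<alpha>' c0] cp' e by (auto simp: ac_simps coprime_commute)
    have "\<gamma> > 0" using e g c0 by (cases "\<gamma> = 0") auto
    then show False using L2[OF cp u2 _ _ uodd] a b g dd by auto
  qed
qed

lemma no_sol:
  fixes w u r s :: nat
  assumes "w > 0" "u^2 = r^2 + d*w^2" "s^2 = u^2 + d*w^2"
  shows False
  using assms
proof (induction w arbitrary: u r s rule: less_induct)
  case (less w)
  have dpos: "d > 0" using d2 by simp
  have dodd: "odd d" using prime_odd_nat[OF dp d2] .
  show False
  proof (cases "coprime u w")
    case False
    define g where "g = gcd u w"
    have g1: "g > 1" using False less.prems(1) unfolding g_def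
      by (metis coprime_iff_gcd_eq_1 gcd_pos_nat less_one nat_neq_iff)
    obtain u' where u': "u = g*u'" unfolding g_def by (metis dvd_def gcd_dvd1)
    obtain w' where w': "w = g*w'" unfolding g_def by (metis dvd_def gcd_dvd2)
    have gu: "g^2 dvd u^2" "g^2 dvd d*w^2" using u' w' by (auto simp: power_mult_distrib)
    have "g^2 dvd r^2 + d*w^2" using gu less.prems(2) by simp
    then have "g^2 dvd r^2" using gu(2) by (simp add: dvd_add_left_iff)
    then have "g dvd r" by simp
    then obtain r' where r': "r = g*r'" by (auto simp: dvd_def)
    have "g^2 dvd s^2" using gu less.prems(3) by simp
    then have "g dvd s" by simp
    then obtain s' where s': "s = g*s'" by (auto simp: dvd_def)
    have gp: "g^2 > 0" using g1 by simp
    have e1: "g^2 * u'^2 = g^2 * (r'^2 + d*w'^2)" using less.prems(2) u' r' w'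
      by (simp add: power_mult_distrib algebra_simps)
    have e2: "g^2 * s'^2 = g^2 * (u'^2 + d*w'^2)" using less.prems(3) u' s' w'
      by (simp add: power_mult_distrib algebra_simps)
    have w'0: "w' > 0" using w' less.prems(1) by (cases "w' = 0") auto
    have "w' < w" using w' g1 w'0 by simp
    then show False using less.IH[OF _ w'0, of u' r' s'] e1 e2 gp by simp
  next
    case cuw: True
    have ndu: "\<not> d dvd u"
    proof
      assume du: "d dvd u"
      then have "d dvd u^2" by (simp add: power2_eq_square)
      then have "d dvd r^2 + d*w^2" using less.prems(2) by simp
      then have "d dvd r^2" by (simp add: dvd_add_left_iff)
      then have "d dvd r" using dp prime_dvd_power by blast
      then have "d^2 dvd r^2" "d^2 dvd u^2" using du by auto
      then have "d^2 dvd d*w^2" using less.prems(2) by (metis dvd_add_right_iff)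
      then have "d dvd w^2" using dpos by (simp add: power2_eq_square)
      then have "d dvd w" using dp prime_dvd_power by blast
      then show False using du cuw dp by (metis coprime_common_divisor not_prime_unit)
    qed
    have weven: "even w"
    proof (rule ccontr)
      assume wodd: "odd w"
      have dw: "odd (d*w^2)" using wodd dodd by simp
      show False
      proof (cases "even u")
        case True
        have "odd (r^2)" using True dw less.prems(2) by (metis even_add even_power zero_less_numeral)
        then have r4: "r^2 mod 4 = 1" using odd_sq4 by simp
        have "odd (s^2)" using True dw less.prems(3) by (metis even_add even_power zero_less_numeral)
        then have s4: "s^2 mod 4 = 1" using odd_sq4 by simp
        have "s^2 = r^2 + 2*(d*w^2)" using less.prems by simp
        moreover obtain k where "d*w^2 = 2*k+1" using dw oddE by blast
        ultimately show False using r4 s4 by presburger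
      next
        case False
        have "even (r^2)" using False dw less.prems(2) by (metis even_add even_power)
        then have r4: "r^2 mod 4 = 0" using even_sq4 by simp
        have "even (s^2)" using False dw less.prems(3) by (metis even_add even_power)
        then have s4: "s^2 mod 4 = 0" using even_sq4 by simp
        have u4: "u^2 mod 4 = 1" using False odd_sq4 by simp
        have "r^2 + s^2 = 2*u^2" using less.prems by simp
        then show False using r4 s4 u4 by presburger
      qed
    qed
    then obtain c0 where wc: "w = 2*c0" by blast
    have c0: "c0 > 0" using wc less.prems(1) by simp
    have uodd: "odd u" using weven cuw less.prems(1)
      by (metis coprime_common_divisor dvd_refl even_zero odd_one)
    have dw: "even (d*w^2)" using weven by simp
    have rodd: "odd r" using uodd dw less.prems(2) by (metis even_add even_power zero_less_numeral)
    have sodd: "odd s" using uodd dw less.prems(3) by (metis even_add even_power zero_less_numeral)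
    have "s^2 = r^2 + 2*(d*w^2)" using less.prems by simp
    moreover have "d*w^2 > 0" using less.prems(1) dpos by simp
    ultimately have "r^2 < s^2" by simp
    then have "r < s" using power_less_imp_less_base by blast
    then obtain t where st: "s = r + t" using less_imp_add_positive by blast
    have "even t" using st rodd sodd by simp
    then obtain \<alpha> where t: "t = 2*\<alpha>" by blast
    define \<beta> where "\<beta> = \<alpha> + r"
    have e1: "4*(\<alpha>*\<beta>) = 4*(2*d*c0^2)"
    proof -
      have "(r + 2*\<alpha>)^2 = r^2 + 2*(d*(2*c0)^2)" using less.prems st t wc by simp
      then show ?thesis unfolding \<beta>_def by (simp add: power2_eq_square algebra_simps)
    qed
    then have ab: "\<alpha>*\<beta> = 2*d*c0^2" by simp
    have u2: "u^2 = \<alpha>^2 + \<beta>^2"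
    proof -
      have "2*u^2 = r^2 + (r+2*\<alpha>)^2" using less.prems st t by simp
      then show ?thesis unfolding \<beta>_def by (simp add: power2_eq_square algebra_simps)
    qed
    have cab: "coprime \<alpha> \<beta>"
    proof (rule coprimeI)
      fix c assume c1: "c dvd \<alpha>" and c2: "c dvd \<beta>"
      have "c dvd s" using c1 c2 st t \<beta>_def by (simp add: dvd_add_right_iff)
      then have codd: "odd c" using sodd dvd_trans by blast
      have "c^2 dvd u^2" using c1 c2 u2 by simp
      then have cu: "c dvd u" by simp
      have "c^2 dvd \<alpha>*\<beta>" using c1 c2 by (simp add: power2_eq_square mult_dvd_mono)
      then have "c^2 dvd 2*(d*c0^2)" using ab by (simp add: mult.assoc)
      moreover have "coprime (c^2) 2" using codd by simp
      ultimately have "c^2 dvd d*c0^2" by (simp add: coprime_dvd_mult_right_iff)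
      moreover have "coprime c c0"
      proof (rule coprimeI)
        fix e assume "e dvd c" "e dvd c0"
        then have "e dvd u" "e dvd w" using cu wc by (auto intro: dvd_trans)
        then show "is_unit e" using cuw coprime_common_divisor by blast
      qed
      then have "coprime (c^2) (c0^2)" by simp
      ultimately have "c^2 dvd d" by (simp add: coprime_dvd_mult_left_iff)
      moreover have "c dvd c^2" by (simp add: power2_eq_square)
      ultimately have cd: "c dvd d" using dvd_trans by blast
      then have "c = 1 \<or> c = d" using dp by (simp add: prime_nat_iff)
      then show "is_unit c"
      proof
        assume "c = d" then show ?thesis using cu ndu by simp
      qed simp
    qed
    have "d dvd \<alpha>*\<beta>" using ab by simp
    then have "d dvd \<alpha> \<or> d dvd \<beta>" using dp prime_dvd_mult_iff by blast
    have IH': "\<And>w' u r s. w' < 2*c0 \<Longrightarrow> w' > 0 \<Longrightarrow> u^2 = r^2 + d*w'^2 \<Longrightarrow> s^2 = u^2 + d*w'^2 \<Longrightarrow> False"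
      using less.IH wc by blast
    have cba: "coprime \<beta> \<alpha>" using cab by (simp add: coprime_commute)
    have u2': "u^2 = \<beta>^2 + \<alpha>^2" using u2 by simp
    have ba: "\<beta>*\<alpha> = 2*d*c0^2" using ab by (simp add: mult.commute)
    show False
      using \<open>d dvd \<alpha> \<or> d dvd \<beta>\<close>
    proof
      assume "d dvd \<beta>"
      then show False using core[OF cab u2 ab _ c0 uodd] IH' by blast
    next
      assume "d dvd \<alpha>"
      then show False using core[OF cba u2' ba _ c0 uodd] IH' by blast
    qed
  qed
qed

end

theorem lemma11:
  fixes d :: nat
  assumes "prime d" and "d > 2"
    and "in_res (-1) d (QNR d)" and "in_res 2 d (QNR d)"
  shows "\<not> (\<exists>k j m e :: nat. k > 0 \<and> j > 0 \<and> coprime m e \<and> m > e \<and> e > 0 \<and>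
            (real d = (real k / (2 * real j))^2 * ((real m ^ 2 - real e ^ 2) / (real e * real m))))"
proof
  assume "\<exists>k j m e :: nat. k > 0 \<and> j > 0 \<and> coprime m e \<and> m > e \<and> e > 0 \<and>
            (real d = (real k / (2 * real j))^2 * ((real m ^ 2 - real e ^ 2) / (real e * real m)))"
  then obtain k j m e :: nat where k0: "k > 0" and j0: "j > 0" and me: "m > e" and e0: "e > 0"
    and eq: "real d = (real k / (2 * real j))^2 * ((real m ^ 2 - real e ^ 2) / (real e * real m))"
    by blast
  have H1': "\<And>x y. d dvd x^2 + y^2 \<Longrightarrow> d dvd x" using H1[OF assms(1,2,3)] by blast
  have H2': "\<And>x y. [y^2 = 2*x^2] (mod d) \<Longrightarrow> d dvd x" using H2[OF assms(1,2,4)] by blast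
  have m0: "m > 0" using me by simp
  define D where "D = m^2 - e^2"
  have em2: "e^2 \<le> m^2" using me by (simp add: power_mono)
  have Dint: "int D = int m^2 - int e^2" unfolding D_def using em2 by (simp add: of_nat_diff)
  have Dreal: "real D = real m^2 - real e^2" unfolding D_def using em2 by (simp add: of_nat_diff)
  have "real d * (4 * real j^2 * (real e * real m)) = real k^2 * real D"
    using eq j0 e0 m0 unfolding Dreal by (simp add: field_simps power2_eq_square)
  then have "real (d * (4 * j^2 * (e * m))) = real (k^2 * D)" by simp
  then have keyn: "d * (4 * j^2 * (e * m)) = k^2 * D" by (simp only: of_nat_eq_iff)
  have key: "int d * (4 * int j^2 * (int e * int m)) = int k^2 * int D"
    using arg_cong[OF keyn, of int] by simp
  define u where "u = k * (m^2 + e^2)"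
  define w where "w = 4 * j * (e * m)"
  define s where "s = k * (D + 2 * (e * m))"
  define r where "r = nat \<bar>int k * (int D - 2 * (int e * int m))\<bar>"
  have rint: "(int r)^2 = (int k * (int D - 2 * (int e * int m)))^2" unfolding r_def by simp
  have dw: "int d * (int w)^2 = 4 * (int e * int m) * (int d * (4 * int j^2 * (int e * int m)))"
    unfolding w_def by (simp add: power2_eq_square algebra_simps)
  have dw2: "int d * (int w)^2 = 4 * (int e * int m) * (int k^2 * int D)" using dw key by simp
  have "int (u^2) = int (r^2 + d * w^2)"
  proof -
    have "int (r^2 + d*w^2) = (int r)^2 + int d * (int w)^2" by simp
    also have "\<dots> = (int k * (int D - 2 * (int e * int m)))^2 + 4 * (int e * int m) * (int k^2 * int D)"
      using rint dw2 by simp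
    also have "\<dots> = (int k * (int m^2 + int e^2))^2" unfolding Dint by (simp add: power2_eq_square algebra_simps)
    also have "\<dots> = int (u^2)" unfolding u_def by simp
    finally show ?thesis by simp
  qed
  then have e1: "u^2 = r^2 + d * w^2" by (simp only: of_nat_eq_iff)
  have "int (s^2) = int (u^2 + d * w^2)"
  proof -
    have "int (u^2 + d*w^2) = (int u)^2 + int d * (int w)^2" by simp
    also have "\<dots> = (int k * (int m^2 + int e^2))^2 + 4 * (int e * int m) * (int k^2 * int D)"
      using dw2 unfolding u_def by simp
    also have "\<dots> = (int k * (int D + 2 * (int e * int m)))^2" unfolding Dint by (simp add: power2_eq_square algebra_simps)
    also have "\<dots> = int (s^2)" unfolding s_def by simp
    finally show ?thesis by simp
  qed
  then have e2: "s^2 = u^2 + d * w^2" by (simp only: of_nat_eq_iff)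
  have w0: "w > 0" unfolding w_def using j0 e0 m0 by simp
  show False
    by (rule no_sol[OF assms(1,2) _ _ w0 e1 e2]) (erule H1', erule H2')
qed

end
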